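(* For every integer $g \ge 0$, let $n'_g$ denote the number of gapsets of genus $g$ and depth at most $3$ (equivalently, the number of numerical semigroups $S$ of genus $g$ whose conductor $c$ and multiplicity $m$ satisfy $c \le 3m$). Then for all $g \ge 3$, $$n'_{g-1}+n'_{g-2} \,\le\, n'_{g} \,\le\, n'_{g-1}+n'_{g-2}+n'_{g-3}.$$
   Context: A gapset is a finite set $G \subset \mathbb{N}_+=\{1,2,3,\dots\}$ such that for all $z \in G$, whenever $z=x+y$ with $x,y\in\mathbb{N}_+$, we have $x\in G$ or $y\in G$; equivalently $G=\mathbb{N}\setminus S$ for a numerical semigroup $S$. The multiplicity of $G$ is the least $m\ge 1$ with $m\notin G$; its Frobenius number is $f=\max G$ (and $f=-1$ if $G=\emptyset$); its conductor is $c=f+1$; its genus is $|G|$; its depth is $q=\lceil c/m\rceil$. *)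

theory Defs
  imports Complex_Main
begin

definition gapset :: "nat set \<Rightarrow> bool" where
  "gapset G \<longleftrightarrow> finite G \<and> 0 \<notin> G \<and>
     (\<forall>z\<in>G. \<forall>x y. 0 < x \<and> 0 < y \<and> z = x + y \<longrightarrow> x \<in> G \<or> y \<in> G)"

definition multiplicity_gs :: "nat set \<Rightarrow> nat" where
  "multiplicity_gs G = (LEAST m. 1 \<le> m \<and> m \<notin> G)"

(* conductor c = f + 1, with f = max G, and f = -1 (so c = 0) for G empty *)
definition conductor_gs :: "nat set \<Rightarrow> nat" where
  "conductor_gs G = (if G = {} then 0 else Max G + 1)"

definition depth_gs :: "nat set \<Rightarrow> nat" where
  "depth_gs G = nat \<lceil>real (conductor_gs G) / real (multiplicity_gs G)\<rceil>"

definition n_depth3 :: "nat \<Rightarrow> nat" where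
  "n_depth3 g = card {G. gapset G \<and> card G = g \<and> depth_gs G \<le> 3}"

end

theory Submission
  imports Defs
begin

definition enc :: "nat \<Rightarrow> nat set \<Rightarrow> nat set \<Rightarrow> nat set" where
  "enc N A B = {1..N} \<union> (\<lambda>a. a + Suc N) ` A \<union> (\<lambda>b. b + 2 * Suc N) ` B"

definition valid :: "nat \<Rightarrow> nat set \<Rightarrow> nat set \<Rightarrow> bool" where
  "valid N A B \<longleftrightarrow> A \<subseteq> {1..N} \<and> B \<subseteq> A \<and>
     (\<forall>x\<in>{1..N} - A. \<forall>y\<in>{1..N} - A. x + y \<notin> B)"

definition T :: "nat \<Rightarrow> (nat \<times> nat set \<times> nat set) set" where
  "T g = {(N, A, B). valid N A B \<and> N + card A + card B = g}"

lemma enc_mem: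
  "x \<in> enc N A B \<longleftrightarrow> (1 \<le> x \<and> x \<le> N) \<or> (Suc N \<le> x \<and> x - Suc N \<in> A)
      \<or> (2 * Suc N \<le> x \<and> x - 2 * Suc N \<in> B)"
proof
  assume "x \<in> enc N A B"
  then show "(1 \<le> x \<and> x \<le> N) \<or> (Suc N \<le> x \<and> x - Suc N \<in> A)
      \<or> (2 * Suc N \<le> x \<and> x - 2 * Suc N \<in> B)"
    unfolding enc_def by auto
next
  assume h: "(1 \<le> x \<and> x \<le> N) \<or> (Suc N \<le> x \<and> x - Suc N \<in> A)
      \<or> (2 * Suc N \<le> x \<and> x - 2 * Suc N \<in> B)"
  show "x \<in> enc N A B"
  proof (cases "1 \<le> x \<and> x \<le> N")
    case True then show ?thesis unfolding enc_def by auto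
  next
    case F: False
    show ?thesis
    proof (cases "Suc N \<le> x \<and> x - Suc N \<in> A")
      case True
      then have "x = (x - Suc N) + Suc N" by simp
      then have "x \<in> (\<lambda>a. a + Suc N) ` A" using True by (metis image_eqI)
      then show ?thesis unfolding enc_def by auto
    next
      case False
      with F h have "2 * Suc N \<le> x \<and> x - 2 * Suc N \<in> B" by blast
      moreover have "x = (x - 2 * Suc N) + 2 * Suc N" using calculation by arith
      ultimately have "x \<in> (\<lambda>b. b + 2 * Suc N) ` B" by (metis image_eqI)
      then show ?thesis unfolding enc_def by auto
    qed
  qed
qed

lemma valid_D:
  assumes "valid N A B"
  shows "A \<subseteq> {1..N}" "B \<subseteq> A" "B \<subseteq> {1..N}"
    "\<And>x y. 1 \<le> x \<Longrightarrow> x \<le> N \<Longrightarrow> x \<notin> A \<Longrightarrow> 1 \<le> y \<Longrightarrow> y \<le> N \<Longrightarrow> y \<notin> A \<Longrightarrow> x + y \<notin> B"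
  using assms unfolding valid_def by auto

lemma enc_bound:
  assumes "valid N A B" "x \<in> enc N A B"
  shows "1 \<le> x" "x < 3 * Suc N"
  using assms(2) valid_D[OF assms(1)] unfolding enc_mem by fastforce+

lemma enc_finite:
  assumes "valid N A B" shows "finite (enc N A B)"
proof -
  have "enc N A B \<subseteq> {..3 * Suc N}" using enc_bound[OF assms] by fastforce
  then show ?thesis using finite_subset by blast
qed

lemma enc_gapset:
  assumes v: "valid N A B"
  shows "gapset (enc N A B)"
  unfolding gapset_def
proof (intro conjI ballI allI impI)
  show "finite (enc N A B)" by (rule enc_finite[OF v])
  show "0 \<notin> enc N A B" using enc_bound[OF v] by fastforce
  fix z x y
  assume z: "z \<in> enc N A B" and h: "0 < x \<and> 0 < y \<and> z = x + y"
  show "x \<in> enc N A B \<or> y \<in> enc N A B"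
  proof (rule ccontr)
    assume "\<not> (x \<in> enc N A B \<or> y \<in> enc N A B)"
    then have nx: "x \<notin> enc N A B" and ny: "y \<notin> enc N A B" by auto
    have xs: "Suc N \<le> x" using nx h unfolding enc_mem by auto
    have ys: "Suc N \<le> y" using ny h unfolding enc_mem by auto
    have AN: "A \<subseteq> {1..N}" "B \<subseteq> A" "B \<subseteq> {1..N}" using valid_D[OF v] by auto
    have zA: "\<not> (Suc N \<le> z \<and> z - Suc N \<in> A)"
    proof
      assume "Suc N \<le> z \<and> z - Suc N \<in> A"
      then have "z - Suc N \<le> N" using AN by auto
      then show False using xs ys h by auto
    qed
    have zB: "2 * Suc N \<le> z" "z - 2 * Suc N \<in> B"
      using z zA xs ys h unfolding enc_mem by auto
    define b where "b = z - 2 * Suc N"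
    have bB: "b \<in> B" using zB b_def by simp
    define x' where "x' = x - Suc N"
    define y' where "y' = y - Suc N"
    have sum: "x' + y' = b" using h xs ys b_def x'_def y'_def by simp
    have xA: "x' \<notin> A" using nx xs unfolding enc_mem x'_def by auto
    have yA: "y' \<notin> A" using ny ys unfolding enc_mem y'_def by auto
    have bN: "1 \<le> b" "b \<le> N" using bB AN by auto
    show False
    proof (cases "x' = 0")
      case True then have "y' = b" using sum by simp
      then show False using yA bB AN by auto
    next
      case False
      show False
      proof (cases "y' = 0")
        case True then have "x' = b" using sum by simp
        then show False using xA bB AN by auto
      next
        case False2: False
        have "x' + y' \<notin> B"
          by (rule valid_D(4)[OF v]) (use False False2 sum bN xA yA in auto)
        then show False using sum bB by simp
      qed
    qed
  qed
qed

lemma enc_card: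
  assumes v: "valid N A B"
  shows "card (enc N A B) = N + card A + card B"
proof -
  have AN: "A \<subseteq> {1..N}" "B \<subseteq> {1..N}" using valid_D[OF v] by auto
  have fA: "finite A" "finite B" using AN finite_subset by blast+
  have i1: "card ((\<lambda>a. a + Suc N) ` A) = card A" by (rule card_image) (auto simp: inj_on_def)
  have i2: "card ((\<lambda>b. b + 2 * Suc N) ` B) = card B" by (rule card_image) (auto simp: inj_on_def)
  have d1: "{1..N} \<inter> (\<lambda>a. a + Suc N) ` A = {}" by auto
  have d2: "({1..N} \<union> (\<lambda>a. a + Suc N) ` A) \<inter> (\<lambda>b. b + 2 * Suc N) ` B = {}"
    using AN by fastforce
  have "card ({1..N} \<union> (\<lambda>a. a + Suc N) ` A) = N + card A"
    using card_Un_disjoint[OF _ _ d1] fA i1 by simp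
  then show ?thesis unfolding enc_def
    using card_Un_disjoint[OF _ _ d2] fA i2 by simp
qed

lemma enc_mult:
  assumes v: "valid N A B"
  shows "multiplicity_gs (enc N A B) = Suc N"
  unfolding multiplicity_gs_def
proof (rule Least_equality)
  have AN: "A \<subseteq> {1..N}" using valid_D[OF v] by auto
  show "1 \<le> Suc N \<and> Suc N \<notin> enc N A B" using AN unfolding enc_mem by auto
  fix y assume "1 \<le> y \<and> y \<notin> enc N A B"
  then show "Suc N \<le> y" unfolding enc_mem by auto
qed

lemma depth_le3: "1 \<le> (m::nat) \<Longrightarrow> nat \<lceil>real c / real m\<rceil> \<le> 3 \<longleftrightarrow> c \<le> 3 * m"
proof -
  assume m: "1 \<le> m"
  have "nat \<lceil>real c / real m\<rceil> \<le> 3 \<longleftrightarrow> \<lceil>real c / real m\<rceil> \<le> 3" by linarith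
  also have "\<dots> \<longleftrightarrow> real c / real m \<le> 3" by (simp add: ceiling_le_iff)
  also have "\<dots> \<longleftrightarrow> real c \<le> 3 * real m" using m by (simp add: pos_divide_le_eq)
  also have "\<dots> \<longleftrightarrow> c \<le> 3 * m" by linarith
  finally show ?thesis .
qed

lemma enc_depth:
  assumes v: "valid N A B"
  shows "depth_gs (enc N A B) \<le> 3"
proof -
  have "conductor_gs (enc N A B) \<le> 3 * Suc N"
  proof (cases "enc N A B = {}")
    case True then show ?thesis unfolding conductor_gs_def by simp
  next
    case False
    have "Max (enc N A B) \<in> enc N A B" using False enc_finite[OF v] by (rule Max_in[rotated])
    then have "Max (enc N A B) < 3 * Suc N" using enc_bound[OF v] by blast
    then show ?thesis using False unfolding conductor_gs_def by simp
  qed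
  then show ?thesis unfolding depth_gs_def enc_mult[OF v]
    using depth_le3[of "Suc N"] by simp
qed

lemma gapset_dec:
  assumes gs: "gapset G" and dp: "depth_gs G \<le> 3"
  shows "\<exists>N A B. valid N A B \<and> G = enc N A B"
proof -
  have fin: "finite G" and z0: "0 \<notin> G"
    and clos: "\<And>z x y. z \<in> G \<Longrightarrow> 0 < x \<Longrightarrow> 0 < y \<Longrightarrow> z = x + y \<Longrightarrow> x \<in> G \<or> y \<in> G"
    using gs unfolding gapset_def by blast+
  define m where "m = multiplicity_gs G"
  obtain k where k: "\<forall>x\<in>G. x < k" using fin finite_nat_set_iff_bounded by blast
  have ex: "1 \<le> Suc k \<and> Suc k \<notin> G" using k by auto
  have m1: "1 \<le> m \<and> m \<notin> G" unfolding m_def multiplicity_gs_def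
    by (rule LeastI[of _ "Suc k"]) (rule ex)
  have below: "\<And>j. 1 \<le> j \<Longrightarrow> j < m \<Longrightarrow> j \<in> G"
  proof -
    fix j assume "1 \<le> j" "j < m"
    then show "j \<in> G" using not_less_Least[of j "\<lambda>m. 1 \<le> m \<and> m \<notin> G"]
      unfolding m_def multiplicity_gs_def by blast
  qed
  have c3: "conductor_gs G \<le> 3 * m"
    using dp depth_le3[of m "conductor_gs G"] m1 unfolding depth_gs_def m_def by simp
  have bound: "\<And>x. x \<in> G \<Longrightarrow> x < 3 * m"
  proof -
    fix x assume x: "x \<in> G"
    then have "G \<noteq> {}" by auto
    then have "conductor_gs G = Max G + 1" unfolding conductor_gs_def by simp
    moreover have "x \<le> Max G" using x fin by simp
    ultimately show "x < 3 * m" using c3 by simp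
  qed
  have m2: "2 * m \<notin> G" using clos[of "2*m" m m] m1 by (auto simp: mult_2)
  define N where "N = m - 1"
  have mN: "m = Suc N" using m1 N_def by simp
  define A where "A = {a \<in> {1..N}. a + m \<in> G}"
  define B where "B = {b \<in> {1..N}. b + 2 * m \<in> G}"
  have v: "valid N A B" unfolding valid_def
  proof (intro conjI ballI)
    show "A \<subseteq> {1..N}" unfolding A_def by auto
    show "B \<subseteq> A"
    proof
      fix b assume b: "b \<in> B"
      then have "b + 2 * m \<in> G" "b \<in> {1..N}" unfolding B_def by auto
      have eq: "b + 2 * m = (b + m) + m" by simp
      have "b + m \<in> G \<or> m \<in> G" by (rule clos[OF _ _ _ eq]) (use \<open>b + 2 * m \<in> G\<close> m1 in auto)
      then show "b \<in> A" using m1 b unfolding A_def B_def by auto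
    qed
    fix x y assume x: "x \<in> {1..N} - A" and y: "y \<in> {1..N} - A"
    show "x + y \<notin> B"
    proof
      assume "x + y \<in> B"
      then have "x + y + 2 * m \<in> G" unfolding B_def by simp
      moreover have "x + y + 2 * m = (x + m) + (y + m)" by simp
      ultimately have "(x + m) + (y + m) \<in> G" by simp
      then have "x + m \<in> G \<or> y + m \<in> G" using clos[of _ "x + m" "y + m"] m1 by auto
      then show False using x y unfolding A_def by auto
    qed
  qed
  have "G = enc N A B"
  proof (rule set_eqI)
    fix x
    show "x \<in> G \<longleftrightarrow> x \<in> enc N A B"
    proof
      assume x: "x \<in> G"
      have x1: "1 \<le> x" using x z0 by (cases x) auto
      have x3: "x < 3 * m" using bound x by blast
      show "x \<in> enc N A B"
      proof (cases "x < m")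
        case True then show ?thesis using x1 mN unfolding enc_mem by auto
      next
        case F1: False
        have xm: "x \<noteq> m" using x m1 by auto
        show ?thesis
        proof (cases "x < 2 * m")
          case True
          have e1: "x - m + m = x" using F1 by arith
          have "1 \<le> x - m" "x - m \<le> N" using True F1 xm mN by arith+
          then have "x - m \<in> A" unfolding A_def using e1 x by simp
          then show ?thesis using F1 mN unfolding enc_mem by auto
        next
          case False
          have "x \<noteq> 2 * m" using x m2 by auto
          then have ge: "2 * m < x" using False by simp
          then have e2: "x - 2 * m + 2 * m = x" by arith
          have "1 \<le> x - 2 * m" "x - 2 * m \<le> N" using ge x3 mN by arith+
          then have "x - 2 * m \<in> B" unfolding B_def using e2 x by simp
          then show ?thesis using False mN unfolding enc_mem by auto
        qed
      qed
    next
      assume "x \<in> enc N A B"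
      then have "(1 \<le> x \<and> x \<le> N) \<or> (Suc N \<le> x \<and> x - Suc N \<in> A)
      \<or> (2 * Suc N \<le> x \<and> x - 2 * Suc N \<in> B)" unfolding enc_mem .
      then show "x \<in> G"
      proof (elim disjE)
        assume "1 \<le> x \<and> x \<le> N" then show ?thesis using below mN by auto
      next
        assume "Suc N \<le> x \<and> x - Suc N \<in> A" then show ?thesis unfolding A_def mN by auto
      next
        assume h: "2 * Suc N \<le> x \<and> x - 2 * Suc N \<in> B"
        then have "x - 2 * m + 2 * m \<in> G" unfolding B_def mN by blast
        moreover have "2 * m \<le> x" using h mN by simp
        then have "x - 2 * m + 2 * m = x" by arith
        ultimately show ?thesis by simp
      qed
    qed
  qed
  then show ?thesis using v by blast
qed

lemma enc_recA:
  assumes v: "valid N A B"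
  shows "a \<in> A \<longleftrightarrow> 1 \<le> a \<and> a \<le> N \<and> a + Suc N \<in> enc N A B"
  using valid_D[OF v] unfolding enc_mem by auto

lemma enc_recB:
  assumes v: "valid N A B"
  shows "b \<in> B \<longleftrightarrow> 1 \<le> b \<and> b \<le> N \<and> b + 2 * Suc N \<in> enc N A B"
  using valid_D[OF v] unfolding enc_mem by auto

lemma enc_inj: "inj_on (\<lambda>(N, A, B). enc N A B) (T g)"
proof (rule inj_onI)
  fix x y assume t: "x \<in> T g" "y \<in> T g"
    and e0: "(\<lambda>(N, A, B). enc N A B) x = (\<lambda>(N, A, B). enc N A B) y"
  obtain N A B where x: "x = (N, A, B)" by (cases x) auto
  obtain N' A' B' where y: "y = (N', A', B')" by (cases y) auto
  have e: "enc N A B = enc N' A' B'" using e0 x y by simp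
  have v: "valid N A B" "valid N' A' B'" using t x y unfolding T_def by auto
  have "Suc N = Suc N'" using enc_mult[OF v(1)] enc_mult[OF v(2)] e by simp
  then have NN: "N = N'" by simp
  have "A = A'" using enc_recA[OF v(1)] enc_recA[OF v(2)] e NN by blast
  moreover have "B = B'" using enc_recB[OF v(1)] enc_recB[OF v(2)] e NN by blast
  ultimately show "x = y" using NN x y by simp
qed

lemma n_depth3_T: "n_depth3 g = card (T g)"
proof -
  have "{G. gapset G \<and> card G = g \<and> depth_gs G \<le> 3} = (\<lambda>(N, A, B). enc N A B) ` T g"
  proof
    show "{G. gapset G \<and> card G = g \<and> depth_gs G \<le> 3} \<subseteq> (\<lambda>(N, A, B). enc N A B) ` T g"
    proof
      fix G assume "G \<in> {G. gapset G \<and> card G = g \<and> depth_gs G \<le> 3}"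
      then have G: "gapset G" "card G = g" "depth_gs G \<le> 3" by auto
      obtain N A B where "valid N A B" "G = enc N A B" using gapset_dec[OF G(1,3)] by blast
      moreover then have "(N, A, B) \<in> T g" unfolding T_def using enc_card G(2) by auto
      ultimately show "G \<in> (\<lambda>(N, A, B). enc N A B) ` T g" by force
    qed
    show "(\<lambda>(N, A, B). enc N A B) ` T g \<subseteq> {G. gapset G \<and> card G = g \<and> depth_gs G \<le> 3}"
      unfolding T_def using enc_gapset enc_card enc_depth by auto
  qed
  then show ?thesis unfolding n_depth3_def using card_image[OF enc_inj] by simp
qed

lemma T_finite: "finite (T g)"
proof -
  have "T g \<subseteq> {..g} \<times> Pow {1..g} \<times> Pow {1..g}"
  proof
    fix t assume "t \<in> T g"
    then obtain N A B where t: "t = (N, A, B)" "valid N A B" "N + card A + card B = g"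
      unfolding T_def by auto
    then have "A \<subseteq> {1..N}" "B \<subseteq> {1..N}" using valid_D by auto
    then show "t \<in> {..g} \<times> Pow {1..g} \<times> Pow {1..g}" using t by auto
  qed
  then show ?thesis by (rule finite_subset) auto
qed

definition f1 :: "nat \<times> nat set \<times> nat set \<Rightarrow> nat \<times> nat set \<times> nat set" where
  "f1 t = (case t of (M, A, B) \<Rightarrow> (Suc M, A, B))"
definition f2 :: "nat \<times> nat set \<times> nat set \<Rightarrow> nat \<times> nat set \<times> nat set" where
  "f2 t = (case t of (M, A, B) \<Rightarrow> (Suc M, insert (Suc M) A, B))"
definition f3 :: "nat \<times> nat set \<times> nat set \<Rightarrow> nat \<times> nat set \<times> nat set" where
  "f3 t = (case t of (N, A, B) \<Rightarrow> (N - 1, A - {N}, B - {N}))"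

definition S3 :: "nat \<Rightarrow> (nat \<times> nat set \<times> nat set) set" where
  "S3 g = {(N, A, B). (N, A, B) \<in> T g \<and> N \<in> B}"

lemma valid_f1: "valid M A B \<Longrightarrow> valid (Suc M) A B"
  unfolding valid_def
proof (elim conjE, intro conjI ballI)
  assume h: "A \<subseteq> {1..M}" "B \<subseteq> A" "\<forall>x\<in>{1..M} - A. \<forall>y\<in>{1..M} - A. x + y \<notin> B"
  show "A \<subseteq> {1..Suc M}" using h by auto
  show "B \<subseteq> A" using h by auto
  fix x y assume "x \<in> {1..Suc M} - A" "y \<in> {1..Suc M} - A"
  then show "x + y \<notin> B" using h by fastforce
qed

lemma valid_f2: "valid M A B \<Longrightarrow> valid (Suc M) (insert (Suc M) A) B"
  unfolding valid_def
proof (elim conjE, intro conjI ballI)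
  assume h: "A \<subseteq> {1..M}" "B \<subseteq> A" "\<forall>x\<in>{1..M} - A. \<forall>y\<in>{1..M} - A. x + y \<notin> B"
  show "insert (Suc M) A \<subseteq> {1..Suc M}" using h by auto
  show "B \<subseteq> insert (Suc M) A" using h by auto
  fix x y assume "x \<in> {1..Suc M} - insert (Suc M) A" "y \<in> {1..Suc M} - insert (Suc M) A"
  then show "x + y \<notin> B" using h by fastforce
qed

lemma f1_T: "t \<in> T h \<Longrightarrow> f1 t \<in> T (Suc h)"
  unfolding T_def f1_def using valid_f1 by auto

lemma f2_T: "t \<in> T h \<Longrightarrow> f2 t \<in> T (Suc (Suc h))"
proof -
  assume "t \<in> T h"
  then obtain M A B where t: "t = (M, A, B)" "valid M A B" "M + card A + card B = h"
    unfolding T_def by auto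
  have "A \<subseteq> {1..M}" using t valid_D by auto
  then have "Suc M \<notin> A" "finite A" using finite_subset by auto
  then have "card (insert (Suc M) A) = Suc (card A)" by simp
  then show ?thesis using t valid_f2 unfolding T_def f2_def by auto
qed

lemma f1_inj: "inj f1"
  unfolding inj_def f1_def by auto

lemma f2_inj: "inj_on f2 (T h)"
proof (rule inj_onI)
  fix x y assume t: "x \<in> T h" "y \<in> T h" and e: "f2 x = f2 y"
  obtain N A B where x: "x = (N, A, B)" by (cases x) auto
  obtain N' A' B' where y: "y = (N', A', B')" by (cases y) auto
  have "A \<subseteq> {1..N}" "A' \<subseteq> {1..N'}" using t x y valid_D unfolding T_def by auto
  moreover have "N = N'" "insert (Suc N) A = insert (Suc N) A'" "B = B'"
    using e x y unfolding f2_def by auto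
  ultimately have "A = A'" by (metis atLeastAtMost_iff insert_ident not_less_eq_eq order_refl subset_eq)
  then show "x = y" using x y \<open>N = N'\<close> \<open>B = B'\<close> by simp
qed

lemma f3_T: "t \<in> S3 g \<Longrightarrow> f3 t \<in> T (g - 3)"
proof -
  assume "t \<in> S3 g"
  then obtain N A B where t: "t = (N, A, B)" "valid N A B" "N + card A + card B = g" "N \<in> B"
    unfolding S3_def T_def by auto
  have AB: "A \<subseteq> {1..N}" "B \<subseteq> A" using t valid_D by auto
  then have fin: "finite A" "finite B"
    using finite_subset[OF AB(1) finite_atLeastAtMost] finite_subset[OF AB(2)] by auto
  have NA: "N \<in> A" using AB t by auto
  have N1: "1 \<le> N" using AB(1) NA by (auto simp: subset_eq)
  have cA: "card (A - {N}) = card A - 1" "card (B - {N}) = card B - 1"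
    using NA t(4) fin by auto
  have "card A > 0" using NA fin(1) card_gt_0_iff by blast
  moreover have "card B > 0" using t(4) fin(2) card_gt_0_iff by blast
  ultimately have pA: "card A \<ge> 1" "card B \<ge> 1" by simp_all
  have w: "(N - 1) + card (A - {N}) + card (B - {N}) = g - 3" using cA pA N1 t(3) by simp
  have v: "valid (N - 1) (A - {N}) (B - {N})"
    unfolding valid_def
  proof (intro conjI ballI)
    show "A - {N} \<subseteq> {1..N - 1}" using AB by auto
    show "B - {N} \<subseteq> A - {N}" using AB by auto
    fix x y assume "x \<in> {1..N - 1} - (A - {N})" "y \<in> {1..N - 1} - (A - {N})"
    then have "x \<in> {1..N} - A" "y \<in> {1..N} - A" by auto
    then have "x + y \<notin> B" using t(2) unfolding valid_def by blast
    then show "x + y \<notin> B - {N}" by blast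
  qed
  show ?thesis using v w t(1) unfolding T_def f3_def by simp
qed

lemma f3_inj: "inj_on f3 (S3 g)"
proof (rule inj_onI)
  fix x y assume t: "x \<in> S3 g" "y \<in> S3 g" and e: "f3 x = f3 y"
  obtain N A B where x: "x = (N, A, B)" by (cases x) auto
  obtain N' A' B' where y: "y = (N', A', B')" by (cases y) auto
  have vv: "valid N A B" "N \<in> B" "valid N' A' B'" "N' \<in> B'"
    using t x y unfolding S3_def T_def by auto
  have h: "N \<in> B" "B \<subseteq> A" "A \<subseteq> {1..N}" "N' \<in> B'" "B' \<subseteq> A'" "A' \<subseteq> {1..N'}"
    using vv valid_D[OF vv(1)] valid_D[OF vv(3)] by auto
  have e': "N - 1 = N' - 1" "A - {N} = A' - {N'}" "B - {N} = B' - {N'}"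
    using e x y unfolding f3_def by auto
  have "1 \<le> N" "1 \<le> N'" using h by (auto simp: subset_eq)
  then have NN: "N = N'" using e'(1) by arith
  have inA: "N \<in> A" "N \<in> A'" using h NN by auto
  have "A = insert N (A - {N})" "A' = insert N (A' - {N})" using inA by auto
  then have "A = A'" using e'(2) NN by metis
  moreover have "B = insert N (B - {N})" "B' = insert N (B' - {N})" using h NN by auto
  then have "B = B'" using e'(3) NN by metis
  ultimately show "x = y" using x y NN by simp
qed

lemma T_split:
  assumes "g \<ge> 3"
  shows "T g \<subseteq> f1 ` T (g - 1) \<union> f2 ` T (g - 2) \<union> S3 g"
proof
  fix t assume tT: "t \<in> T g"
  then obtain N A B where t: "t = (N, A, B)" "valid N A B" "N + card A + card B = g"
    unfolding T_def by auto
  have AB: "A \<subseteq> {1..N}" "B \<subseteq> A" using t valid_D by auto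
  then have fin: "finite A" "finite B"
    using finite_subset[OF AB(1) finite_atLeastAtMost] finite_subset[OF AB(2)] by auto
  have hv: "\<forall>x\<in>{1..N} - A. \<forall>y\<in>{1..N} - A. x + y \<notin> B" using t(2) unfolding valid_def by blast
  have "N \<noteq> 0"
  proof
    assume "N = 0"
    then have "A = {}" "B = {}" using AB by auto
    then show False using t \<open>N = 0\<close> assms by simp
  qed
  then obtain M where M: "N = Suc M" by (cases N) auto
  show "t \<in> f1 ` T (g - 1) \<union> f2 ` T (g - 2) \<union> S3 g"
  proof (cases "N \<in> A")
    case False
    have v: "valid M A B" unfolding valid_def
    proof (intro conjI ballI)
      show "A \<subseteq> {1..M}" using AB False M by (auto simp: subset_eq le_Suc_eq)
      show "B \<subseteq> A" using AB by auto
      fix x y assume "x \<in> {1..M} - A" "y \<in> {1..M} - A"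
      then show "x + y \<notin> B" using hv M by auto
    qed
    then have "(M, A, B) \<in> T (g - 1)" unfolding T_def using t M by auto
    moreover have "t = f1 (M, A, B)" using t M unfolding f1_def by simp
    ultimately show ?thesis by blast
  next
    case NA: True
    show ?thesis
    proof (cases "N \<in> B")
      case True
      then show ?thesis using tT t unfolding S3_def by auto
    next
      case False
      have v: "valid M (A - {N}) B" unfolding valid_def
      proof (intro conjI ballI)
        show "A - {N} \<subseteq> {1..M}" using AB M by (auto simp: subset_eq le_Suc_eq)
        show "B \<subseteq> A - {N}" using AB False by auto
        fix x y assume "x \<in> {1..M} - (A - {N})" "y \<in> {1..M} - (A - {N})"
        then show "x + y \<notin> B" using hv M by auto
      qed
      have "card (A - {N}) = card A - 1" using NA fin by simp
      moreover have "card A > 0" using NA fin(1) card_gt_0_iff by blast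
      ultimately have "(M, A - {N}, B) \<in> T (g - 2)" unfolding T_def using t M v by auto
      moreover have "t = f2 (M, A - {N}, B)" using t M NA unfolding f2_def by auto
      ultimately show ?thesis by blast
    qed
  qed
qed

theorem mainTheorem1:
  fixes g :: nat
  assumes "g \<ge> 3"
  shows "n_depth3 (g - 1) + n_depth3 (g - 2) \<le> n_depth3 g \<and>
         n_depth3 g \<le> n_depth3 (g - 1) + n_depth3 (g - 2) + n_depth3 (g - 3)"
proof -
  have g1: "Suc (g - 1) = g" "Suc (Suc (g - 2)) = g" using assms by auto
  have sub1: "f1 ` T (g - 1) \<subseteq> T g" using f1_T[of _ "g - 1"] g1 by auto
  have sub2: "f2 ` T (g - 2) \<subseteq> T g" using f2_T[of _ "g - 2"] g1 by auto
  have disj: "f1 ` T (g - 1) \<inter> f2 ` T (g - 2) = {}"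
  proof (rule ccontr)
    assume "f1 ` T (g - 1) \<inter> f2 ` T (g - 2) \<noteq> {}"
    then obtain x y where x: "x \<in> T (g - 1)" and y: "y \<in> T (g - 2)" and e: "f1 x = f2 y" by blast
    obtain N A B where xx: "x = (N, A, B)" by (cases x) auto
    obtain N' A' B' where yy: "y = (N', A', B')" by (cases y) auto
    have "A \<subseteq> {1..N}" using x xx valid_D unfolding T_def by auto
    moreover have "N = N'" "A = insert (Suc N') A'" using e xx yy unfolding f1_def f2_def by auto
    ultimately show False by auto
  qed
  have c1: "card (f1 ` T (g - 1)) = card (T (g - 1))" using f1_inj by (simp add: card_image inj_on_subset)
  have c2: "card (f2 ` T (g - 2)) = card (T (g - 2))" using f2_inj by (simp add: card_image)
  have low: "card (T (g - 1)) + card (T (g - 2)) \<le> card (T g)"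
  proof -
    have "card (f1 ` T (g - 1) \<union> f2 ` T (g - 2)) = card (T (g - 1)) + card (T (g - 2))"
      using card_Un_disjoint[OF _ _ disj] T_finite c1 c2 by simp
    moreover have "card (f1 ` T (g - 1) \<union> f2 ` T (g - 2)) \<le> card (T g)"
      using sub1 sub2 T_finite by (intro card_mono) auto
    ultimately show ?thesis by simp
  qed
  have up: "card (T g) \<le> card (T (g - 1)) + card (T (g - 2)) + card (T (g - 3))"
  proof -
    have fS: "finite (S3 g)" using T_finite[of g] unfolding S3_def
      by (rule finite_subset[rotated]) auto
    have "card (T g) \<le> card (f1 ` T (g - 1) \<union> f2 ` T (g - 2) \<union> S3 g)"
      using T_split[OF assms] T_finite fS by (intro card_mono) auto
    also have "\<dots> \<le> card (f1 ` T (g - 1) \<union> f2 ` T (g - 2)) + card (S3 g)"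
      by (rule card_Un_le)
    also have "\<dots> \<le> card (f1 ` T (g - 1)) + card (f2 ` T (g - 2)) + card (S3 g)"
      using card_Un_le by simp
    also have "card (S3 g) = card (f3 ` S3 g)" using f3_inj by (simp add: card_image)
    also have "card (f3 ` S3 g) \<le> card (T (g - 3))"
      using f3_T T_finite by (intro card_mono) auto
    finally show ?thesis using c1 c2 by simp
  qed
  show ?thesis using low up unfolding n_depth3_T by simp
qed

end
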